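(* Let $n\in\mathbb{N}^*$ and let $c\in\mathfrak{S}_{n+1}$ be a Coxeter element. The map $\Phi_c$, which sends $\boldsymbol\pi=(\pi^k)_{1\le k\le n}\in\mathcal{ST}(c)$ to the filling of $\boldsymbol\lambda(c)$ whose value at the box $\langle k,\delta\rangle_{\boldsymbol\lambda(c)}$ is $\pi^k_\delta$ (the $\delta$-th part of $\pi^k$, zero if $\delta>\ell(\pi^k)$), is a bijection from $\mathcal{ST}(c)$ onto $\mathrm{RPP}(\boldsymbol\lambda(c))$.
   Context: Coxeter element of $\mathfrak{S}_{n+1}$: product of $s_1,\dots,s_n$ ($s_i=(i,i+1)$), each exactly once; it is a long cycle $(c_1=1<c_2<\dots<c_m=n+1>c_{m+1}>\dots>c_{n+1})$, with $\mathbf L_c=\{c_2,\dots,c_{m-1}\}$, $\mathbf R_c=\{c_{m+1},\dots,c_{n+1}\}$. With $\mathbf L=\mathbf L_c\cup\{1\}=\{\ell_1<\dots<\ell_p\}$ and $\mathbf R=\mathbf R_c\cup\{n+1\}$, $\boldsymbol\lambda(c)$ is the partition with parts $\#\{r\in\mathbf R:\ell_i<r\}$. For a partition $\lambda$: $\mathrm{Fer}(\lambda)=\{(i,j):j\le\lambda_i\}$; $D_k(\lambda)=\{(i,j)\in\mathrm{Fer}(\lambda):\lambda_1+i-j=k\}$; $\delta_k=\max\{\min(i,j):(i,j)\in D_k(\lambda)\}$; the box $(i,j)\in D_k(\lambda)$ has coordinates $\langle k,\delta\rangle_\lambda$ with $\delta=\delta_k-\min(i,j)+1$. $\mathrm{RPP}(\lambda)$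 is the set of maps $\mathrm{Fer}(\lambda)\to\mathbb{N}$ weakly increasing for the componentwise order. Storability: a pair of partitions $(\lambda,\mu)$ (padded with zeros) is storable if $\lambda_i\ge\mu_i\ge\lambda_{i+1}$ for all $i\ge1$. A triple $(\lambda,\mu,\nu)$ is $(\boxplus,\boxplus)$-storable if $(\lambda,\mu),(\nu,\mu)$ are storable; $(\boxplus,\boxminus)$ if $(\lambda,\mu),(\mu,\nu)$ are; $(\boxminus,\boxplus)$ if $(\mu,\lambda),(\nu,\mu)$ are; $(\boxminus,\boxminus)$ if $(\mu,\lambda),(\mu,\nu)$ are. For $\boldsymbol\pi=(\pi^1,\dots,\pi^n)$ set $\pi^0=\pi^{n+1}=(0)$; $\boldsymbol\pi$ is $X$-storable at $i$ if $(\pi^{i-1},\pi^i,\pi^{i+1})$ is. With $\mathbf R[-1]=\{r-1:r\in\mathbf R\}$, $\boldsymbol\pi\in\mathcal{ST}(c)$ means that for each $i\in\{1,\dots,n\}$: $(\boxplus,\boxplus)$-storable at $i$ if $i\notin\mathbf L\cup\mathbf R[-1]$; $(\boxplus,\boxminus)$ at $i$ if $i\in\mathbf R[-1]\setminus\mathbf L$; $(\boxminus,\boxplus)$ at $i$ if $i\in\mathbf L\setminus\mathbf R[-1]$; $(\boxminus,\boxminus)$ at $i$ if $i\in\mathbf L\cap\mathbf R[-1]$; and $\pi^k=(0)$ for $k\notin\{\min\mathbf L,\dots,\max\mathbf R\}$. (For such $\boldsymbol\pi$, $\ell(\pi^k)\le\#D_k(\boldsymbol\lambda(c))$, so $\Phi_c$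 is well defined.) *)

theory Defs
  imports Main
begin

definition simple_transp :: "nat \<Rightarrow> nat \<Rightarrow> nat" where
  "simple_transp i x = (if x = i then Suc i else if x = Suc i then i else x)"

definition coxeter_elem :: "nat \<Rightarrow> (nat \<Rightarrow> nat) \<Rightarrow> bool" where
  "coxeter_elem n c \<longleftrightarrow>
     (\<exists>is. distinct is \<and> set is = {1..n} \<and> c = foldr (\<lambda>i f. simple_transp i \<circ> f) is id)"

text \<open>Writing c as the long cycle (c_1 = 1, c_2, ..., c_{n+1}) with c_{k+1} = c^k(1),
  and c_m = n+1: L_c = {c_2,...,c_{m-1}}, R_c = {c_{m+1},...,c_{n+1}}.\<close>
definition Lc :: "nat \<Rightarrow> (nat \<Rightarrow> nat) \<Rightarrow> nat set" where
  "Lc n c = {(c ^^ k) 1 | k. 0 < k \<and> k \<le> n \<and> (\<forall>j\<le>k. (c ^^ j) 1 \<noteq> n + 1)}"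

definition Rc :: "nat \<Rightarrow> (nat \<Rightarrow> nat) \<Rightarrow> nat set" where
  "Rc n c = {(c ^^ k) 1 | k. k \<le> n \<and> (\<exists>j<k. (c ^^ j) 1 = n + 1)}"

definition Lset :: "nat \<Rightarrow> (nat \<Rightarrow> nat) \<Rightarrow> nat set" where
  "Lset n c = Lc n c \<union> {1}"

definition Rset :: "nat \<Rightarrow> (nat \<Rightarrow> nat) \<Rightarrow> nat set" where
  "Rset n c = Rc n c \<union> {n + 1}"

definition is_partition :: "nat list \<Rightarrow> bool" where
  "is_partition xs \<longleftrightarrow> sorted (rev xs) \<and> 0 \<notin> set xs"

text \<open>The i-th part (1-indexed), zero beyond the length (padding with zeros).\<close>
definition part :: "nat list \<Rightarrow> nat \<Rightarrow> nat" where
  "part xs i = (if 1 \<le> i \<and> i \<le> length xs then xs ! (i - 1) else 0)"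

definition lam :: "nat \<Rightarrow> (nat \<Rightarrow> nat) \<Rightarrow> nat list" where
  "lam n c = map (\<lambda>l. card {r \<in> Rset n c. l < r}) (sorted_list_of_set (Lset n c))"

definition Fer :: "nat list \<Rightarrow> (nat \<times> nat) set" where
  "Fer la = {(i, j). 1 \<le> i \<and> 1 \<le> j \<and> j \<le> part la i}"

definition Dk :: "nat list \<Rightarrow> nat \<Rightarrow> (nat \<times> nat) set" where
  "Dk la k = {(i, j) \<in> Fer la. int (part la 1) + int i - int j = int k}"

definition delta :: "nat list \<Rightarrow> nat \<Rightarrow> nat" where
  "delta la k = Max ((\<lambda>(i, j). min i j) ` Dk la k)"

definition coord :: "nat list \<Rightarrow> nat \<times> nat \<Rightarrow> nat \<times> nat" where
  "coord la b = (case b of (i, j) \<Rightarrow>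
     (let k = part la 1 + i - j in (k, delta la k - min i j + 1)))"

definition RPP :: "nat list \<Rightarrow> (nat \<times> nat \<Rightarrow> nat) set" where
  "RPP la = {f. (\<forall>b. b \<notin> Fer la \<longrightarrow> f b = 0) \<and>
     (\<forall>i j i' j'. (i, j) \<in> Fer la \<longrightarrow> (i', j') \<in> Fer la \<longrightarrow> i \<le> i' \<longrightarrow> j \<le> j'
        \<longrightarrow> f (i, j) \<le> f (i', j'))}"

definition storable :: "nat list \<Rightarrow> nat list \<Rightarrow> bool" where
  "storable la mu \<longleftrightarrow> (\<forall>i\<ge>1. part mu i \<le> part la i \<and> part la (Suc i) \<le> part mu i)"

datatype box_sign = BPlus | BMinus

definition storable3 :: "box_sign \<Rightarrow> box_sign \<Rightarrow> nat list \<Rightarrow> nat list \<Rightarrow> nat list \<Rightarrow> bool" where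
  "storable3 X Y la mu nu \<longleftrightarrow>
     (if X = BPlus then storable la mu else storable mu la) \<and>
     (if Y = BPlus then storable nu mu else storable mu nu)"

text \<open>A tuple (pi^1,...,pi^n) is a list of length n; comp gives pi^k, with
  pi^k = (0) (the empty partition) for k outside {1..n}.\<close>
definition comp :: "nat \<Rightarrow> nat list list \<Rightarrow> nat \<Rightarrow> nat list" where
  "comp n ps k = (if 1 \<le> k \<and> k \<le> n then ps ! (k - 1) else [])"

definition ST :: "nat \<Rightarrow> (nat \<Rightarrow> nat) \<Rightarrow> nat list list set" where
  "ST n c = {ps. length ps = n \<and> (\<forall>p\<in>set ps. is_partition p) \<and>
     (\<forall>i\<in>{1..n}. storable3
         (if i \<in> Lset n c then BMinus else BPlus)
         (if i \<in> (\<lambda>r. r - 1) ` Rset n c then BMinus else BPlus)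
         (comp n ps (i - 1)) (comp n ps i) (comp n ps (i + 1))) \<and>
     (\<forall>k\<in>{1..n}. k \<notin> {Min (Lset n c)..Max (Rset n c)} \<longrightarrow> comp n ps k = [])}"

definition Phi :: "nat \<Rightarrow> (nat \<Rightarrow> nat) \<Rightarrow> nat list list \<Rightarrow> nat \<times> nat \<Rightarrow> nat" where
  "Phi n c ps b = (if b \<in> Fer (lam n c) then
     (case coord (lam n c) b of (k, d) \<Rightarrow> part (comp n ps k) d) else 0)"

end

theory Submission
  imports Defs
begin


definition cw :: "nat list \<Rightarrow> nat \<Rightarrow> nat" where
  "cw ws = foldr (\<lambda>i f. simple_transp i \<circ> f) ws id"

lemma foldr_st_gen: "foldr (\<lambda>i f. simple_transp i \<circ> f) xs h = foldr (\<lambda>i f. simple_transp i \<circ> f) xs id \<circ> h"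
  by (induction xs) (auto simp: comp_assoc)

lemma cw_append: "cw (xs @ ys) = cw xs \<circ> cw ys"
  unfolding cw_def foldr_append by (rule foldr_st_gen)

lemma cw_Nil[simp]: "cw [] = id" by (simp add: cw_def)
lemma cw_Cons: "cw (i # ws) = simple_transp i \<circ> cw ws" by (simp add: cw_def)

lemma st_invol[simp]: "simple_transp i (simple_transp i x) = x"
  by (simp add: simple_transp_def)

lemma inj_st: "inj (simple_transp i)"
  by (metis injI st_invol)

lemma inj_cw: "inj (cw ws)"
proof (induction ws)
  case Nil then show ?case by simp
next
  case (Cons a ws) show ?case unfolding cw_Cons by (rule inj_compose[OF inj_st Cons.IH])
qed

lemma st_in: "1 \<le> i \<Longrightarrow> i < N \<Longrightarrow> x \<in> {1..N} \<Longrightarrow> simple_transp i x \<in> {1..N}"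
  by (auto simp: simple_transp_def)

lemma cw_in: "\<forall>i\<in>set ws. 1 \<le> i \<and> i < N \<Longrightarrow> x \<in> {1..N} \<Longrightarrow> cw ws x \<in> {1..N}"
proof (induction ws arbitrary: x)
  case Nil then show ?case by simp
next
  case (Cons a ws)
  then have "cw ws x \<in> {1..N}" by simp
  then show ?case using Cons.prems st_in[of a N "cw ws x"] by (simp add: cw_Cons)
qed

lemma cw_surj: assumes "\<forall>i\<in>set ws. 1 \<le> i \<and> i < N" shows "cw ws ` {1..N} = {1..N}"
  using assms
proof (induction ws)
  case Nil then show ?case by simp
next
  case (Cons i ws)
  have "simple_transp i ` {1..N} = {1..N}"
  proof
    show "simple_transp i ` {1..N} \<subseteq> {1..N}" using Cons.prems st_in[of i N] by auto
    show "{1..N} \<subseteq> simple_transp i ` {1..N}"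
    proof
      fix x assume "x \<in> {1..N}"
      then have "simple_transp i x \<in> {1..N}" using Cons.prems st_in[of i N x] by simp
      then show "x \<in> simple_transp i ` {1..N}" by (metis image_eqI st_invol)
    qed
  qed
  have "cw (i # ws) ` {1..N} = simple_transp i ` (cw ws ` {1..N})"
    by (simp add: cw_Cons image_comp)
  then show ?case using Cons \<open>simple_transp i ` {1..N} = {1..N}\<close> by simp
qed

lemma cw_fix: "\<forall>i\<in>set ws. Suc i < x \<Longrightarrow> cw ws x = x"
  by (induction ws) (auto simp: cw_Cons simple_transp_def)

definition trans_on :: "(nat \<Rightarrow> nat) \<Rightarrow> nat \<Rightarrow> bool" where
  "trans_on f N \<longleftrightarrow> (\<forall>x\<in>{1..N}. \<forall>y\<in>{1..N}. \<exists>k. (f ^^ k) x = y)"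

lemma conj_trans:
  assumes "c \<circ> w = w \<circ> c'" "w ` {1..N} = {1..N}" "trans_on c' N"
  shows "trans_on c N"
proof -
  have pw: "(c ^^ k) (w x) = w ((c' ^^ k) x)" for k x
  proof (induction k)
    case 0 then show ?case by simp
  next
    case (Suc k)
    have "(c ^^ Suc k) (w x) = c (w ((c' ^^ k) x))" using Suc by simp
    also have "\<dots> = w (c' ((c' ^^ k) x))" using fun_cong[OF assms(1), of "(c' ^^ k) x"] by simp
    finally show ?case by simp
  qed
  show ?thesis unfolding trans_on_def
  proof (intro ballI)
    fix x y assume "x \<in> {1..N}" "y \<in> {1..N}"
    then have "x \<in> w ` {1..N}" "y \<in> w ` {1..N}" using assms(2) by simp_all
    then obtain x' y' where x': "x' \<in> {1..N}" "x = w x'" and y': "y' \<in> {1..N}" "y = w y'"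
      by blast
    then obtain k where "(c' ^^ k) x' = y'" using assms(3) unfolding trans_on_def by blast
    then have "(c ^^ k) x = y" using pw[of k x'] x' y' by simp
    then show "\<exists>k. (c ^^ k) x = y" by blast
  qed
qed

lemma ext_run:
  assumes maps: "\<forall>x\<in>{1..m}. f x \<in> {1..m}" and x: "x \<in> {1..m}"
    and nm: "\<forall>j<k. (f ^^ j) x \<noteq> m"
  shows "((f \<circ> simple_transp m) ^^ k) x = (f ^^ k) x \<and> (f ^^ k) x \<in> {1..m}"
  using nm
proof (induction k)
  case 0 then show ?case using x by simp
next
  case (Suc k)
  have ne_all: "\<forall>j<k. (f ^^ j) x \<noteq> m" using Suc.prems by simp
  have ih: "((f \<circ> simple_transp m) ^^ k) x = (f ^^ k) x" "(f ^^ k) x \<in> {1..m}"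
    using Suc.IH[OF ne_all] by blast+
  have ne: "(f ^^ k) x \<noteq> m" using Suc.prems by simp
  have "simple_transp m ((f ^^ k) x) = (f ^^ k) x"
    using ih(2) ne by (auto simp: simple_transp_def)
  have "((f \<circ> simple_transp m) ^^ Suc k) x = f (simple_transp m (((f \<circ> simple_transp m) ^^ k) x))"
    by (simp only: funpow.simps comp_apply)
  also have "\<dots> = f ((f ^^ k) x)" by (simp only: ih(1) \<open>simple_transp m ((f ^^ k) x) = (f ^^ k) x\<close>)
  finally have A: "((f \<circ> simple_transp m) ^^ Suc k) x = f ((f ^^ k) x)" .
  have B: "(f ^^ Suc k) x = f ((f ^^ k) x)" by simp
  show ?case
  proof (rule conjI)
    show "((f \<circ> simple_transp m) ^^ Suc k) x = (f ^^ Suc k) x" by (simp only: A B)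
    show "(f ^^ Suc k) x \<in> {1..m}" using B ih(2) maps by simp
  qed
qed

lemma ext_trans:
  assumes m1: "1 \<le> m" and maps: "\<forall>x\<in>{1..m}. f x \<in> {1..m}" and fx: "f (Suc m) = Suc m"
    and T: "trans_on f m"
  shows "trans_on (f \<circ> simple_transp m) (Suc m)"
proof -
  let ?g = "f \<circ> simple_transp m"
  have to_top: "\<exists>k. (?g ^^ k) x = Suc m" if "x \<in> {1..Suc m}" for x
  proof (cases "x = Suc m")
    case True then show ?thesis by (intro exI[of _ 0]) simp
  next
    case False
    then have x: "x \<in> {1..m}" using that by auto
    then have ex: "\<exists>k. (f ^^ k) x = m" using T m1 unfolding trans_on_def by auto
    define k where "k = (LEAST k. (f ^^ k) x = m)"
    have k: "(f ^^ k) x = m" unfolding k_def using ex by (rule LeastI_ex)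
    have "\<forall>j<k. (f ^^ j) x \<noteq> m" unfolding k_def using not_less_Least by blast
    from ext_run[OF maps x this] k have "(?g ^^ k) x = m" by simp
    then have "(?g ^^ Suc k) x = Suc m" by (simp add: simple_transp_def fx)
    then show ?thesis by blast
  qed
  have from_top: "\<exists>k. (?g ^^ k) (Suc m) = y" if "y \<in> {1..Suc m}" for y
  proof (cases "y = Suc m")
    case True then show ?thesis by (intro exI[of _ 0]) simp
  next
    case False
    then have y: "y \<in> {1..m}" using that by auto
    have fm: "f m \<in> {1..m}" using maps m1 by auto
    have ex: "\<exists>k. (f ^^ k) (f m) = m" using T m1 fm unfolding trans_on_def by auto
    define P where "P = (\<lambda>k. (f ^^ k) (f m) = y \<or> (f ^^ k) (f m) = m)"
    define k where "k = (LEAST k. P k)"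
    have k: "P k" unfolding k_def using ex P_def by (metis LeastI)
    have kl: "\<forall>j<k. \<not> P j" unfolding k_def using not_less_Least by blast
    then have "\<forall>j<k. (f ^^ j) (f m) \<noteq> m" unfolding P_def by blast
    from ext_run[OF maps fm this] have run: "(?g ^^ k) (f m) = (f ^^ k) (f m)" by simp
    have g1: "?g (Suc m) = f m" by (simp add: simple_transp_def)
    have "(?g ^^ Suc k) (Suc m) = (?g ^^ k) (f m)" by (simp add: funpow_swap1 simple_transp_def)
    show ?thesis
    proof (cases "(f ^^ k) (f m) = y")
      case True
      have "(?g ^^ Suc k) (Suc m) = y" using run True \<open>(?g ^^ Suc k) (Suc m) = _\<close> by simp
      then show ?thesis by blast
    next
      case False
      then have km: "(f ^^ Suc k) m = m" using k unfolding P_def by (simp add: funpow_swap1)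
      have mm: "m \<in> {1..m}" using m1 by simp
      obtain t where t: "(f ^^ t) m = y" using T y mm unfolding trans_on_def by blast
      have t': "(f ^^ (t mod Suc k)) m = y" using funpow_mod_eq[OF km] t by simp
      have ym: "y \<noteq> m" using False k unfolding P_def by auto
      have "t mod Suc k \<noteq> 0"
      proof
        assume "t mod Suc k = 0"
        then have "y = m" using t' by simp
        then show False using ym by simp
      qed
      then obtain j where j: "t mod Suc k = Suc j" by (cases "t mod Suc k") auto
      have "t mod Suc k < Suc k" by simp
      then have "j < k" using j by simp
      moreover have "P j" using t' j unfolding P_def by (simp add: funpow_swap1)
      ultimately show ?thesis using kl by blast
    qed
  qed
  show ?thesis unfolding trans_on_def
  proof (intro ballI)
    fix x y assume "x \<in> {1..Suc m}" "y \<in> {1..Suc m}"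
    then obtain a b where "(?g ^^ a) x = Suc m" "(?g ^^ b) (Suc m) = y"
      using to_top from_top by blast
    then have "(?g ^^ (b + a)) x = y" by (simp add: funpow_add)
    then show "\<exists>k. (?g ^^ k) x = y" by blast
  qed
qed


lemma cox_trans: "distinct ws \<Longrightarrow> set ws = {1..n} \<Longrightarrow> trans_on (cw ws) (Suc n)"
proof (induction n arbitrary: ws)
  case 0
  then have "ws = []" by simp
  then show ?case by (auto simp: trans_on_def intro!: exI[of _ 0])
next
  case (Suc m)
  have "Suc m \<in> set ws" using Suc.prems by simp
  then obtain u v where ws: "ws = u @ Suc m # v" by (meson split_list)
  have d: "distinct (v @ u)" using Suc.prems(1) ws by auto
  have "Suc m \<notin> set u" "Suc m \<notin> set v" using Suc.prems(1) ws by auto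
  then have "set (v @ u) = set ws - {Suc m}" using ws by auto
  also have "\<dots> = {1..Suc m} - {Suc m}" using Suc.prems(2) by simp
  also have "\<dots> = {1..m}" by auto
  finally have s: "set (v @ u) = {1..m}" .
  define f where "f = cw (v @ u)"
  have T: "trans_on f (Suc m)" unfolding f_def using Suc.IH[OF d s] .
  have maps: "\<forall>x\<in>{1..Suc m}. f x \<in> {1..Suc m}"
    unfolding f_def using s by (intro ballI cw_in) auto
  have fx: "f (Suc (Suc m)) = Suc (Suc m)" unfolding f_def using s by (intro cw_fix) auto
  have T2: "trans_on (f \<circ> simple_transp (Suc m)) (Suc (Suc m))"
    using ext_trans[OF _ maps fx T] by simp
  define w where "w = cw u \<circ> simple_transp (Suc m)"
  have c: "cw ws = cw u \<circ> simple_transp (Suc m) \<circ> cw v" by (simp add: ws cw_append cw_Cons comp_assoc)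
  have f': "f \<circ> simple_transp (Suc m) = cw v \<circ> w" unfolding f_def w_def by (simp add: cw_append comp_assoc)
  have comm: "cw ws \<circ> w = w \<circ> (f \<circ> simple_transp (Suc m))"
    unfolding c f' w_def by (simp add: comp_assoc)
  have weq: "w = cw (u @ [Suc m])" unfolding w_def by (simp add: cw_append cw_Cons)
  have "\<forall>i\<in>set (u @ [Suc m]). 1 \<le> i \<and> i < Suc (Suc m)"
  proof
    fix i assume "i \<in> set (u @ [Suc m])"
    then have "i \<in> set ws" using ws by auto
    then show "1 \<le> i \<and> i < Suc (Suc m)" using Suc.prems(2) by auto
  qed
  then have ws_img: "w ` {1..Suc (Suc m)} = {1..Suc (Suc m)}" unfolding weq by (rule cw_surj)
  show ?case using conj_trans[OF comm ws_img T2] .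
qed

lemma orbit_facts:
  assumes T: "trans_on c (Suc n)" and ic: "inj c" and maps: "\<forall>x\<in>{1..Suc n}. c x \<in> {1..Suc n}"
  shows "inj_on (\<lambda>k. (c ^^ k) 1) {0..n}" and "(\<lambda>k. (c ^^ k) 1) ` {0..n} = {1..Suc n}"
proof -
  have inr: "(c ^^ k) 1 \<in> {1..Suc n}" for k
  proof (induction k)
    case 0 then show ?case by simp
  next
    case (Suc k) then show ?case using maps by simp
  qed
  show inj: "inj_on (\<lambda>k. (c ^^ k) 1) {0..n}"
  proof (rule ccontr)
    assume "\<not> ?thesis"
    then obtain a b where ab: "a \<in> {0..n}" "b \<in> {0..n}" "a \<noteq> b" "(c ^^ a) 1 = (c ^^ b) 1"
      unfolding inj_on_def by blast
    have "\<exists>a b. a < b \<and> b \<le> n \<and> (c ^^ a) 1 = (c ^^ b) 1"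
    proof (cases "a < b")
      case True then show ?thesis using ab by auto
    next
      case False then have "b < a" using ab by simp
      then show ?thesis using ab by (intro exI[of _ b] exI[of _ a]) auto
    qed
    then obtain a b where ab2: "a < b" "b \<le> n" "(c ^^ a) 1 = (c ^^ b) 1" by blast
    define d where "d = b - a"
    have dpos: "0 < d" "d \<le> n" using ab2 unfolding d_def by auto
    have "b = a + d" unfolding d_def using ab2 by simp
    then have "(c ^^ b) 1 = (c ^^ a) ((c ^^ d) 1)" by (simp add: funpow_add)
    then have "(c ^^ a) ((c ^^ d) 1) = (c ^^ a) 1" using ab2 by simp
    moreover have "inj (c ^^ a)" using ic by simp
    ultimately have per: "(c ^^ d) 1 = 1" by (meson injD)
    have "{1..Suc n} \<subseteq> (\<lambda>k. (c ^^ k) 1) ` {..<d}"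
    proof
      fix y assume y: "y \<in> {1..Suc n}"
      have one: "1 \<in> {1..Suc n}" by simp
      obtain t where "(c ^^ t) 1 = y" using T y one unfolding trans_on_def by blast
      then have "(c ^^ (t mod d)) 1 = y" using funpow_mod_eq[OF per] by simp
      moreover have "t mod d < d" using dpos by simp
      ultimately show "y \<in> (\<lambda>k. (c ^^ k) 1) ` {..<d}" by blast
    qed
    then have "card {1..Suc n} \<le> card ((\<lambda>k. (c ^^ k) 1) ` {..<d})" by (intro card_mono) auto
    also have "\<dots> \<le> d" using card_image_le[of "{..<d}"] by simp
    finally show False using dpos by simp
  qed
  have sub: "(\<lambda>k. (c ^^ k) 1) ` {0..n} \<subseteq> {1..Suc n}" using inr by auto
  have "card ((\<lambda>k. (c ^^ k) 1) ` {0..n}) = Suc n" using card_image[OF inj] by simp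
  then show "(\<lambda>k. (c ^^ k) 1) ` {0..n} = {1..Suc n}" using sub by (intro card_subset_eq) auto
qed

lemma cox_orbit:
  assumes "coxeter_elem n c"
  shows "inj_on (\<lambda>k. (c ^^ k) 1) {0..n}" and "(\<lambda>k. (c ^^ k) 1) ` {0..n} = {1..Suc n}"
proof -
  obtain ws where ws: "distinct ws" "set ws = {1..n}" "c = cw ws"
    using assms unfolding coxeter_elem_def cw_def by blast
  have T: "trans_on c (Suc n)" using cox_trans[OF ws(1,2)] ws(3) by simp
  have ic: "inj c" using inj_cw ws(3) by simp
  have "\<forall>i\<in>set ws. 1 \<le> i \<and> i < Suc n" using ws by auto
  then have maps: "\<forall>x\<in>{1..Suc n}. c x \<in> {1..Suc n}" using cw_in ws(3) by blast
  show "inj_on (\<lambda>k. (c ^^ k) 1) {0..n}" "(\<lambda>k. (c ^^ k) 1) ` {0..n} = {1..Suc n}"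
    using orbit_facts[OF T ic maps] by auto
qed


lemma LR_props:
  assumes n1: "1 \<le> n" and cx: "coxeter_elem n c"
  shows "Lset n c \<union> Rset n c = {1..Suc n}" "Lset n c \<inter> Rset n c = {}"
    "1 \<in> Lset n c" "Suc n \<in> Rset n c"
proof -
  define orb where "orb = (\<lambda>k. (c ^^ k) 1)"
  have inj: "inj_on orb {0..n}" and img: "orb ` {0..n} = {1..Suc n}"
    using cox_orbit[OF cx] by (simp_all add: orb_def)
  have "Suc n \<in> orb ` {0..n}" using img by simp
  then obtain m0 where m0': "Suc n = orb m0" "m0 \<in> {0..n}" by (rule imageE)
  then have m0: "m0 \<in> {0..n}" "orb m0 = Suc n" by simp_all
  have o0: "orb 0 = 1" unfolding orb_def by simp
  have m0pos: "0 < m0" using m0 o0 n1 by (cases m0) auto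
  have eqi: "orb a = orb b \<Longrightarrow> a \<le> n \<Longrightarrow> b \<le> n \<Longrightarrow> a = b" for a b
    using inj unfolding inj_on_def by auto
  have A: "(\<forall>j\<le>k. orb j \<noteq> Suc n) \<longleftrightarrow> k < m0" if "k \<le> n" for k
  proof
    assume a: "\<forall>j\<le>k. orb j \<noteq> Suc n"
    show "k < m0"
    proof (rule ccontr)
      assume "\<not> k < m0"
      then have "m0 \<le> k" by simp
      then show False using a m0(2) by blast
    qed
  next
    assume km: "k < m0"
    show "\<forall>j\<le>k. orb j \<noteq> Suc n"
    proof (intro allI impI)
      fix j assume "j \<le> k"
      show "orb j \<noteq> Suc n"
      proof
        assume "orb j = Suc n"
        then have "j = m0" using eqi[of j m0] m0 \<open>j \<le> k\<close> that by simp
        then show False using km \<open>j \<le> k\<close> by simp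
      qed
    qed
  qed
  have B: "(\<exists>j<k. orb j = Suc n) \<longleftrightarrow> m0 < k" if "k \<le> n" for k
  proof
    assume "\<exists>j<k. orb j = Suc n"
    then obtain j where "j < k" "orb j = Suc n" by blast
    then have "j = m0" using eqi[of j m0] m0 that by simp
    then show "m0 < k" using \<open>j < k\<close> by simp
  next
    assume "m0 < k" then show "\<exists>j<k. orb j = Suc n" using m0 by blast
  qed
  have Lc: "Lc n c = orb ` {1..<m0}"
  proof
    show "Lc n c \<subseteq> orb ` {1..<m0}"
    proof
      fix x assume "x \<in> Lc n c"
      then have "\<exists>k. x = orb k \<and> 0 < k \<and> k \<le> n \<and> (\<forall>j\<le>k. orb j \<noteq> Suc n)"
        unfolding Lc_def orb_def by simp
      then obtain k where k: "x = orb k" "0 < k" "k \<le> n" "\<forall>j\<le>k. orb j \<noteq> Suc n"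
        by blast
      then have "k < m0" using A by blast
      then show "x \<in> orb ` {1..<m0}" using k by auto
    qed
    show "orb ` {1..<m0} \<subseteq> Lc n c"
    proof
      fix x assume "x \<in> orb ` {1..<m0}"
      then obtain k where k: "x = orb k" "0 < k" "k < m0" by auto
      then have "k \<le> n" using m0 by simp
      then have "\<forall>j\<le>k. orb j \<noteq> Suc n" using A k by blast
      then have "\<exists>k'. x = orb k' \<and> 0 < k' \<and> k' \<le> n \<and> (\<forall>j\<le>k'. orb j \<noteq> Suc n)"
        using k \<open>k \<le> n\<close> by blast
      then show "x \<in> Lc n c" unfolding Lc_def orb_def by simp
    qed
  qed
  have Rc: "Rc n c = orb ` {m0<..n}"
  proof
    show "Rc n c \<subseteq> orb ` {m0<..n}"
    proof
      fix x assume "x \<in> Rc n c"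
      then have "\<exists>k. x = orb k \<and> k \<le> n \<and> (\<exists>j<k. orb j = Suc n)"
        unfolding Rc_def orb_def by simp
      then obtain k where k: "x = orb k" "k \<le> n" "\<exists>j<k. orb j = Suc n"
        by blast
      then have "m0 < k" using B by blast
      then show "x \<in> orb ` {m0<..n}" using k by auto
    qed
    show "orb ` {m0<..n} \<subseteq> Rc n c"
    proof
      fix x assume "x \<in> orb ` {m0<..n}"
      then obtain k where k: "x = orb k" "m0 < k" "k \<le> n" by auto
      then have "\<exists>j<k. orb j = Suc n" using B by blast
      then have "\<exists>k'. x = orb k' \<and> k' \<le> n \<and> (\<exists>j<k'. orb j = Suc n)"
        using k by blast
      then show "x \<in> Rc n c" unfolding Rc_def orb_def by simp
    qed
  qed
  have L: "Lset n c = orb ` {0..<m0}"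
  proof -
    have "{0..<m0} = insert 0 {1..<m0}" using m0pos by auto
    then show ?thesis unfolding Lset_def Lc using o0 by auto
  qed
  have R: "Rset n c = orb ` {m0..n}"
  proof -
    have "{m0..n} = insert m0 {m0<..n}" using m0 by auto
    then show ?thesis unfolding Rset_def Rc using m0 by auto
  qed
  have "{0..<m0} \<union> {m0..n} = {0..n}" using m0 by auto
  then have "orb ` {0..<m0} \<union> orb ` {m0..n} = orb ` {0..n}" by (metis image_Un)
  then show "Lset n c \<union> Rset n c = {1..Suc n}" unfolding L R using img by simp
  have "orb ` {0..<m0} \<inter> orb ` {m0..n} = {}"
  proof (rule ccontr)
    assume "orb ` {0..<m0} \<inter> orb ` {m0..n} \<noteq> {}"
    then obtain a b where ab: "a < m0" "m0 \<le> b" "b \<le> n" "orb a = orb b" by auto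
    then have "a = b" using eqi[of a b] m0 by simp
    then show False using ab by simp
  qed
  then show "Lset n c \<inter> Rset n c = {}" unfolding L R .
  show "1 \<in> Lset n c" "Suc n \<in> Rset n c" unfolding Lset_def Rset_def by auto
qed



locale LRc =
  fixes n :: nat and c :: "nat \<Rightarrow> nat"
  assumes n1: "1 \<le> n" and un: "Lset n c \<union> Rset n c = {1..Suc n}"
    and dj: "Lset n c \<inter> Rset n c = {}"
    and oneL: "1 \<in> Lset n c" and topR: "Suc n \<in> Rset n c"
begin

abbreviation "L \<equiv> Lset n c"
abbreviation "R \<equiv> Rset n c"
abbreviation "q \<equiv> card R"
abbreviation "p \<equiv> card L"
abbreviation "la \<equiv> lam n c"
abbreviation "sL \<equiv> sorted_list_of_set L"

definition A where "A k = card {l \<in> L. l \<le> k}"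
definition B where "B k = card {r \<in> R. r \<le> k}"

lemma Lsub: "L \<subseteq> {1..Suc n}" using un by blast
lemma Rsub: "R \<subseteq> {1..Suc n}" using un by blast
lemma finL: "finite L" using Lsub finite_subset by blast
lemma finR: "finite R" using Rsub finite_subset by blast

lemma pq: "p + q = Suc n"
proof -
  have "card (L \<union> R) = p + q" using card_Un_disjoint[OF finL finR dj] .
  then show ?thesis using un by simp
qed

lemma AB: "k \<le> Suc n \<Longrightarrow> A k + B k = k"
proof -
  assume k: "k \<le> Suc n"
  have fin1: "finite {l \<in> L. l \<le> k}" using finL by simp
  have fin2: "finite {r \<in> R. r \<le> k}" using finR by simp
  have d: "{l \<in> L. l \<le> k} \<inter> {r \<in> R. r \<le> k} = {}" using dj by blast
  have "{l \<in> L. l \<le> k} \<union> {r \<in> R. r \<le> k} = (L \<union> R) \<inter> {..k}" by blast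
  also have "\<dots> = {1..Suc n} \<inter> {..k}" using un by simp
  also have "\<dots> = {1..k}" using k by auto
  finally have "{l \<in> L. l \<le> k} \<union> {r \<in> R. r \<le> k} = {1..k}" .
  then have "card ({l \<in> L. l \<le> k} \<union> {r \<in> R. r \<le> k}) = k" by simp
  then show ?thesis unfolding A_def B_def using card_Un_disjoint[OF fin1 fin2 d] by simp
qed

lemma A0: "A 0 = 0"
proof -
  have "{l \<in> L. l \<le> 0} = {}" using Lsub by auto
  then show ?thesis unfolding A_def by simp
qed

lemma A_Suc: "A (Suc k) = (if Suc k \<in> L then Suc (A k) else A k)"
proof (cases "Suc k \<in> L")
  case True
  have "{l \<in> L. l \<le> Suc k} = insert (Suc k) {l \<in> L. l \<le> k}" using True by auto
  moreover have "Suc k \<notin> {l \<in> L. l \<le> k}" by simp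
  ultimately show ?thesis using True finL unfolding A_def by simp
next
  case False
  have "{l \<in> L. l \<le> Suc k} = {l \<in> L. l \<le> k}" using False by (auto simp: le_Suc_eq)
  then show ?thesis using False unfolding A_def by simp
qed

lemma A_mono: "k \<le> k' \<Longrightarrow> A k \<le> A k'"
  unfolding A_def using finL by (intro card_mono) auto

lemma A_le_p: "A k \<le> p"
  unfolding A_def using finL by (intro card_mono) auto

lemma A_big: "Suc n \<le> k \<Longrightarrow> A k = p"
proof -
  assume "Suc n \<le> k"
  then have "{l \<in> L. l \<le> k} = L" using Lsub by auto
  then show ?thesis unfolding A_def by simp
qed

lemma A_le_k: "A k \<le> k"
  by (induction k) (simp_all add: A0 A_Suc)

lemma A_Suc_le: "A (Suc k) \<le> Suc (A k)"
  by (simp add: A_Suc)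

lemma q_pos: "1 \<le> q"
proof -
  have "0 < q" using finR topR card_gt_0_iff by blast
  then show ?thesis by simp
qed
lemma p_pos: "1 \<le> p"
proof -
  have "0 < p" using finL oneL card_gt_0_iff by blast
  then show ?thesis by simp
qed

lemma kqA: "k \<le> n \<Longrightarrow> k < q + A k"
proof -
  assume k: "k \<le> n"
  have "{r \<in> R. r \<le> k} \<subseteq> R - {Suc n}" using k by auto
  then have "B k \<le> card (R - {Suc n})" unfolding B_def using finR by (intro card_mono) auto
  also have "\<dots> = q - 1" using topR finR by simp
  finally have "B k \<le> q - 1" .
  moreover have "A k + B k = k" using k by (intro AB) simp
  ultimately show ?thesis using q_pos by linarith
qed

lemma kqA': "k \<le> Suc n \<Longrightarrow> k \<le> q + A k"
proof -
  assume k: "k \<le> Suc n"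
  have "B k \<le> q" unfolding B_def using finR by (intro card_mono) auto
  then show ?thesis using AB[OF k] by linarith
qed

lemma sL_set: "set sL = L" using finL by simp
lemma sL_len: "length sL = p" using finL by simp
lemma sL_strict: "sorted_wrt (<) sL" by simp

lemma card_less_sL:
  assumes m: "m < p" shows "card {l \<in> L. l < sL ! m} = m"
proof -
  have "{l \<in> L. l < sL ! m} = (\<lambda>t. sL ! t) ` {..<m}"
  proof
    show "{l \<in> L. l < sL ! m} \<subseteq> (\<lambda>t. sL ! t) ` {..<m}"
    proof
      fix x assume x: "x \<in> {l \<in> L. l < sL ! m}"
      then have "x \<in> set sL" using sL_set by simp
      then obtain t where t: "t < length sL" "x = sL ! t" by (metis in_set_conv_nth)
      have "t < m"
      proof (rule ccontr)
        assume "\<not> t < m"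
        then have "m \<le> t" by simp
        then have "sL ! m \<le> sL ! t"
          using t sL_strict sorted_wrt_nth_less[OF sL_strict, of m t] by (cases "m = t") auto
        then show False using x t by simp
      qed
      then show "x \<in> (\<lambda>t. sL ! t) ` {..<m}" using t by auto
    qed
    show "(\<lambda>t. sL ! t) ` {..<m} \<subseteq> {l \<in> L. l < sL ! m}"
    proof
      fix x assume "x \<in> (\<lambda>t. sL ! t) ` {..<m}"
      then obtain t where t: "t < m" "x = sL ! t" by auto
      have "x < sL ! m" using sorted_wrt_nth_less[OF sL_strict t(1)] m sL_len t by simp
      moreover have "x \<in> L" using t m sL_len sL_set by (metis nth_mem order.strict_trans)
      ultimately show "x \<in> {l \<in> L. l < sL ! m}" by simp
    qed
  qed
  moreover have "inj_on (\<lambda>t. sL ! t) {..<m}"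
    using distinct_sorted_list_of_set m sL_len by (auto simp: inj_on_def nth_eq_iff_index_eq)
  ultimately show ?thesis by (simp add: card_image)
qed

lemma A_sL: assumes m: "m < p" shows "A (sL ! m) = Suc m"
proof -
  have mem: "sL ! m \<in> L" using m sL_len sL_set by (metis nth_mem)
  have "{l \<in> L. l \<le> sL ! m} = insert (sL ! m) {l \<in> L. l < sL ! m}" using mem by auto
  then show ?thesis unfolding A_def using card_less_sL[OF m] finL by simp
qed

lemma sL_le_iff: assumes m: "m < p" shows "sL ! m \<le> k \<longleftrightarrow> Suc m \<le> A k"
proof
  assume "sL ! m \<le> k" then show "Suc m \<le> A k" using A_mono A_sL[OF m] by metis
next
  assume a: "Suc m \<le> A k"
  show "sL ! m \<le> k"
  proof (rule ccontr)
    assume "\<not> sL ! m \<le> k"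
    then have "{l \<in> L. l \<le> k} \<subseteq> {l \<in> L. l < sL ! m}" by auto
    then have "A k \<le> card {l \<in> L. l < sL ! m}" unfolding A_def using finL by (intro card_mono) auto
    then show False using a card_less_sL[OF m] by simp
  qed
qed

lemma sL_in: "m < p \<Longrightarrow> sL ! m \<in> L" using sL_len sL_set by (metis nth_mem)

lemma la_len: "length la = p" unfolding lam_def using sL_len by simp

lemma part_la: assumes i: "1 \<le> i" "i \<le> p"
  shows "part la i = q - (sL ! (i - 1) - i)" and "i \<le> sL ! (i - 1)" and "sL ! (i - 1) - i \<le> q"
proof -
  define l where "l = sL ! (i - 1)"
  have lL: "l \<in> L" unfolding l_def using i sL_in by simp
  have Al: "A l = i" unfolding l_def using A_sL[of "i - 1"] i by simp
  have lle: "l \<le> Suc n" using lL Lsub by auto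
  have ABl: "A l + B l = l" using AB[OF lle] .
  have Bq: "B l \<le> q" unfolding B_def using finR by (intro card_mono) auto
  have RU: "R = {r \<in> R. r \<le> l} \<union> {r \<in> R. l < r}" by auto
  have "card ({r \<in> R. r \<le> l} \<union> {r \<in> R. l < r}) = B l + card {r \<in> R. l < r}"
    unfolding B_def by (rule card_Un_disjoint) (use finR in auto)
  then have "q = B l + card {r \<in> R. l < r}" using RU by simp
  moreover have "part la i = card {r \<in> R. l < r}"
    unfolding part_def l_def using i la_len by (simp add: lam_def sL_len)
  ultimately show "part la i = q - (sL ! (i - 1) - i)" using ABl Al unfolding l_def by linarith
  show "i \<le> sL ! (i - 1)" using ABl Al unfolding l_def by linarith
  show "sL ! (i - 1) - i \<le> q" using ABl Al Bq unfolding l_def by linarith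
qed

lemma Fer_iff: "(i, j) \<in> Fer la \<longleftrightarrow> 1 \<le> i \<and> 1 \<le> j \<and> i \<le> A (q + i - j)"
proof (cases "1 \<le> i \<and> i \<le> p")
  case True
  define l where "l = sL ! (i - 1)"
  have pl: "part la i = q - (l - i)" "i \<le> l" "l - i \<le> q" using part_la True unfolding l_def by auto
  have im: "i - 1 < p" using True by linarith
  have iff: "l \<le> k \<longleftrightarrow> i \<le> A k" for k using sL_le_iff[OF im, of k] True unfolding l_def by simp
  have "(i, j) \<in> Fer la \<longleftrightarrow> 1 \<le> j \<and> j \<le> q - (l - i)" unfolding Fer_def using True pl by simp
  also have "\<dots> \<longleftrightarrow> 1 \<le> j \<and> l \<le> q + i - j" using pl True by linarith
  also have "\<dots> \<longleftrightarrow> 1 \<le> j \<and> i \<le> A (q + i - j)" using iff by simp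
  finally show ?thesis using True by simp
next
  case False
  have "part la i = 0" using False la_len unfolding part_def by auto
  then have "(i, j) \<notin> Fer la" unfolding Fer_def by simp
  moreover have "\<not> (1 \<le> i \<and> i \<le> A (q + i - j))" using False A_le_p[of "q + i - j"] by linarith
  ultimately show ?thesis by simp
qed

lemma part_la_1: "part la 1 = q"
proof -
  have "sL ! 0 \<le> 1 \<longleftrightarrow> 1 \<le> A 1" using sL_le_iff[of 0 1] p_pos by simp
  moreover have "A 1 = 1" using A_Suc[of 0] A0 oneL by simp
  ultimately have "sL ! 0 \<le> 1" by simp
  then show ?thesis using part_la[of 1] p_pos by simp
qed


definition C where "C k = q + A k - k"
definition dl where "dl k = min (A k) (C k)"
definition box where "box k d = (A k + 1 - d, q + (A k + 1 - d) - k)"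
definition valid where "valid k d \<longleftrightarrow> 1 \<le> k \<and> k \<le> n \<and> 1 \<le> d \<and> d \<le> dl k"

lemma A_pos: "1 \<le> k \<Longrightarrow> 1 \<le> A k"
proof -
  assume "1 \<le> k"
  then have "A 1 \<le> A k" by (rule A_mono)
  moreover have "A 1 = 1" using A_Suc[of 0] A0 oneL by simp
  ultimately show ?thesis by simp
qed

lemma A_pos_rev: "1 \<le> A k \<Longrightarrow> 1 \<le> k"
  using A0 by (cases k) auto

lemma Fer_k: assumes "(i, j) \<in> Fer la"
  shows "1 \<le> q + i - j" "q + i - j \<le> n" "j < q + i" "1 \<le> i" "1 \<le> j" "i \<le> A (q + i - j)"
proof -
  have f: "1 \<le> i" "1 \<le> j" "i \<le> A (q + i - j)" using assms Fer_iff by auto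
  then show "1 \<le> i" "1 \<le> j" "i \<le> A (q + i - j)" by auto
  have "1 \<le> A (q + i - j)" using f by simp
  then show k1: "1 \<le> q + i - j" by (rule A_pos_rev)
  then show "j < q + i" by simp
  have "A (q + i - j) \<le> p" by (rule A_le_p)
  then show "q + i - j \<le> n" using f pq by linarith
qed

lemma Dk_eq: assumes k: "1 \<le> k" "k \<le> n"
  shows "Dk la k = (\<lambda>i. (i, q + i - k)) ` {i. 1 \<le> i \<and> k < q + i \<and> i \<le> A k}"
proof
  show "Dk la k \<subseteq> (\<lambda>i. (i, q + i - k)) ` {i. 1 \<le> i \<and> k < q + i \<and> i \<le> A k}"
  proof
    fix b assume b: "b \<in> Dk la k"
    obtain i j where bij: "b = (i, j)" by (cases b)
    have F: "(i, j) \<in> Fer la" and e: "int q + int i - int j = int k"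
      using b bij part_la_1 unfolding Dk_def by auto
    have "j = q + i - k" "k < q + i" using e Fer_k[OF F] by linarith+
    moreover have "i \<le> A k" "1 \<le> i" using Fer_k[OF F] \<open>j = q + i - k\<close> \<open>k < q + i\<close>
      by (metis diff_diff_cancel less_or_eq_imp_le)+
    ultimately show "b \<in> (\<lambda>i. (i, q + i - k)) ` {i. 1 \<le> i \<and> k < q + i \<and> i \<le> A k}"
      using bij by auto
  qed
  show "(\<lambda>i. (i, q + i - k)) ` {i. 1 \<le> i \<and> k < q + i \<and> i \<le> A k} \<subseteq> Dk la k"
  proof
    fix b assume "b \<in> (\<lambda>i. (i, q + i - k)) ` {i. 1 \<le> i \<and> k < q + i \<and> i \<le> A k}"
    then obtain i where i: "b = (i, q + i - k)" "1 \<le> i" "k < q + i" "i \<le> A k" by auto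
    have e: "q + i - (q + i - k) = k" using i by simp
    have "(i, q + i - k) \<in> Fer la" unfolding Fer_iff e using i by simp
    moreover have "int q + int i - int (q + i - k) = int k" using i by simp
    ultimately show "b \<in> Dk la k" unfolding Dk_def using i part_la_1 by simp
  qed
qed

lemma delta_eq: assumes k: "1 \<le> k" "k \<le> n" shows "delta la k = dl k"
proof -
  define S where "S = {i. 1 \<le> i \<and> k < q + i \<and> i \<le> A k}"
  have "delta la k = Max ((\<lambda>(i, j). min i j) ` ((\<lambda>i. (i, q + i - k)) ` S))"
    unfolding delta_def Dk_eq[OF k] S_def ..
  also have "\<dots> = Max ((\<lambda>i. min i (q + i - k)) ` S)" by (simp add: image_image)
  also have "\<dots> = min (A k) (q + A k - k)"
  proof (rule Max_eqI)
    show "finite ((\<lambda>i. min i (q + i - k)) ` S)"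
      unfolding S_def by (rule finite_imageI) (rule finite_subset[of _ "{..A k}"], auto)
    show "y \<le> min (A k) (q + A k - k)" if "y \<in> (\<lambda>i. min i (q + i - k)) ` S" for y
      using that unfolding S_def by auto
    have "A k \<in> S" unfolding S_def using A_pos[OF k(1)] kqA[OF k(2)] by simp
    then show "min (A k) (q + A k - k) \<in> (\<lambda>i. min i (q + i - k)) ` S" by blast
  qed
  finally show ?thesis unfolding dl_def C_def .
qed

lemma coord_eq: assumes F: "(i, j) \<in> Fer la"
  shows "coord la (i, j) = (q + i - j, A (q + i - j) + 1 - i)"
proof -
  define k where "k = q + i - j"
  have f: "1 \<le> k" "k \<le> n" "j < q + i" "1 \<le> i" "1 \<le> j" "i \<le> A k"
    using Fer_k[OF F] unfolding k_def by auto
  have jk: "j = q + i - k" unfolding k_def using f by simp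
  have kq: "k < q + i" using f jk by linarith
  have e: "dl k - min i j + 1 = A k + 1 - i"
    unfolding dl_def C_def jk using f kq by (simp add: min_def; arith)
  have "coord la (i, j) = (q + i - j, delta la (q + i - j) - min i j + 1)"
    unfolding coord_def Let_def part_la_1 by simp
  also have "\<dots> = (k, dl k - min i j + 1)" using delta_eq[OF f(1,2)] unfolding k_def by simp
  also have "\<dots> = (k, A k + 1 - i)" using e by simp
  finally show ?thesis unfolding k_def .
qed


lemma C_pos: "k \<le> n \<Longrightarrow> 1 \<le> C k" unfolding C_def using kqA by fastforce

lemma valid_box: assumes v: "valid k d"
  shows "box k d \<in> Fer la" "coord la (box k d) = (k, d)"
proof -
  define i where "i = A k + 1 - d"
  have v': "1 \<le> k" "k \<le> n" "1 \<le> d" "d \<le> A k" "d \<le> q + A k - k"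
    using v unfolding valid_def dl_def C_def by auto
  have kq: "k \<le> q + A k" using kqA[OF v'(2)] by simp
  have i: "1 \<le> i" "i \<le> A k" "k < q + i" using v' kq unfolding i_def by linarith+
  have e: "q + i - (q + i - k) = k" using i by simp
  have F: "(i, q + i - k) \<in> Fer la" unfolding Fer_iff e using i by simp
  have b: "box k d = (i, q + i - k)" unfolding box_def i_def by simp
  show "box k d \<in> Fer la" using F b by simp
  have "A k + 1 - i = d" unfolding i_def using v' by simp
  then show "coord la (box k d) = (k, d)" unfolding b coord_eq[OF F] e by simp
qed

lemma Fer_box: assumes F: "(i, j) \<in> Fer la"
  shows "valid (q + i - j) (A (q + i - j) + 1 - i)" "box (q + i - j) (A (q + i - j) + 1 - i) = (i, j)"
proof -
  define k where "k = q + i - j"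
  have f: "1 \<le> k" "k \<le> n" "j < q + i" "1 \<le> i" "1 \<le> j" "i \<le> A k"
    using Fer_k[OF F] unfolding k_def by auto
  show "valid (q + i - j) (A (q + i - j) + 1 - i)"
    unfolding k_def[symmetric] valid_def dl_def C_def using f unfolding k_def by linarith
  show "box (q + i - j) (A (q + i - j) + 1 - i) = (i, j)"
    unfolding k_def[symmetric] box_def using f unfolding k_def by simp
qed

lemma Phi_Fer: "(i, j) \<in> Fer la \<Longrightarrow> Phi n c ps (i, j) = part (comp n ps (q + i - j)) (A (q + i - j) + 1 - i)"
  unfolding Phi_def by (simp add: coord_eq)

lemma Phi_out: "b \<notin> Fer la \<Longrightarrow> Phi n c ps b = 0"
  unfolding Phi_def by simp

lemma Phi_box: "valid k d \<Longrightarrow> Phi n c ps (box k d) = part (comp n ps k) d"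
  unfolding Phi_def using valid_box by simp

definition Adj where
  "Adj ps k \<longleftrightarrow> (if Suc k \<in> L then storable (comp n ps (Suc k)) (comp n ps k)
                   else storable (comp n ps k) (comp n ps (Suc k)))"

lemma MinL: "Min L = 1"
  using finL oneL Lsub by (intro Min_eqI) auto

lemma MaxR: "Max R = Suc n"
  using finR topR Rsub by (intro Max_eqI) auto

lemma Rm1_iff: "1 \<le> i \<Longrightarrow> i \<in> (\<lambda>r. r - 1) ` R \<longleftrightarrow> Suc i \<in> R"
proof
  assume "1 \<le> i" "i \<in> (\<lambda>r. r - 1) ` R"
  then obtain r where "r \<in> R" "i = r - 1" by auto
  moreover then have "1 \<le> r" using Rsub by auto
  ultimately show "Suc i \<in> R" using \<open>1 \<le> i\<close> by (metis Suc_diff_1 less_le_trans zero_less_one)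
next
  assume "Suc i \<in> R"
  then show "i \<in> (\<lambda>r. r - 1) ` R" by force
qed

lemma RnotL: "k \<le> n \<Longrightarrow> Suc k \<in> R \<longleftrightarrow> Suc k \<notin> L"
  using un dj by auto

lemma cond_iff: assumes i: "1 \<le> i" "i \<le> n"
  shows "storable3 (if i \<in> L then BMinus else BPlus)
          (if i \<in> (\<lambda>r. r - 1) ` R then BMinus else BPlus)
          (comp n ps (i - 1)) (comp n ps i) (comp n ps (i + 1)) \<longleftrightarrow> Adj ps (i - 1) \<and> Adj ps i"
proof -
  have s: "Suc (i - 1) = i" using i by simp
  have r: "i \<in> (\<lambda>r. r - 1) ` R \<longleftrightarrow> Suc i \<notin> L" using Rm1_iff[OF i(1)] RnotL[OF i(2)] by simp
  show ?thesis unfolding storable3_def Adj_def s r by simp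
qed

lemma ST_iff: "ps \<in> ST n c \<longleftrightarrow> length ps = n \<and> (\<forall>x\<in>set ps. is_partition x) \<and> (\<forall>k\<le>n. Adj ps k)"
proof -
  have vac: "\<forall>k\<in>{1..n}. k \<notin> {Min L..Max R} \<longrightarrow> comp n ps k = []" unfolding MinL MaxR by auto
  have "(\<forall>i\<in>{1..n}. storable3 (if i \<in> L then BMinus else BPlus)
          (if i \<in> (\<lambda>r. r - 1) ` R then BMinus else BPlus)
          (comp n ps (i - 1)) (comp n ps i) (comp n ps (i + 1)))
        \<longleftrightarrow> (\<forall>i\<in>{1..n}. Adj ps (i - 1) \<and> Adj ps i)" using cond_iff by simp
  also have "\<dots> \<longleftrightarrow> (\<forall>k\<le>n. Adj ps k)"
  proof
    assume a: "\<forall>i\<in>{1..n}. Adj ps (i - 1) \<and> Adj ps i"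
    show "\<forall>k\<le>n. Adj ps k"
    proof (intro allI impI)
      fix k assume "k \<le> n"
      show "Adj ps k"
      proof (cases k)
        case 0
        have "1 \<in> {1..n}" using n1 by simp
        then have "Adj ps (1 - 1)" using a by blast
        then show ?thesis using 0 by simp
      next
        case (Suc m) then show ?thesis using a \<open>k \<le> n\<close> by fastforce
      qed
    qed
  next
    assume "\<forall>k\<le>n. Adj ps k" then show "\<forall>i\<in>{1..n}. Adj ps (i - 1) \<and> Adj ps i" by auto
  qed
  finally show ?thesis unfolding ST_def using vac by blast
qed


lemma comp_0[simp]: "comp n ps 0 = []" unfolding comp_def by simp
lemma comp_top[simp]: "comp n ps (Suc n) = []" unfolding comp_def by simp
lemma part_Nil[simp]: "part [] d = 0" unfolding part_def by simp

lemma storableD1: "storable la' mu \<Longrightarrow> 1 \<le> i \<Longrightarrow> part mu i \<le> part la' i"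
  unfolding storable_def by blast
lemma storableD2: "storable la' mu \<Longrightarrow> 1 \<le> i \<Longrightarrow> part la' (Suc i) \<le> part mu i"
  unfolding storable_def by blast

lemma bound_A:
  assumes adj: "\<forall>k\<le>n. Adj ps k"
  shows "k \<le> n \<Longrightarrow> A k < d \<Longrightarrow> part (comp n ps k) d = 0"
proof (induction k arbitrary: d)
  case 0 then show ?case by simp
next
  case (Suc k)
  have ak: "Adj ps k" using adj Suc.prems by simp
  show ?case
  proof (cases "Suc k \<in> L")
    case True
    then have st: "storable (comp n ps (Suc k)) (comp n ps k)" using ak unfolding Adj_def by simp
    have AS: "A (Suc k) = Suc (A k)" using True A_Suc by simp
    obtain d' where d: "d = Suc d'" using Suc.prems AS by (cases d) auto
    have d1: "1 \<le> d'" "A k < d'" using Suc.prems AS d by auto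
    have "part (comp n ps (Suc k)) (Suc d') \<le> part (comp n ps k) d'" using storableD2[OF st d1(1)] .
    moreover have "part (comp n ps k) d' = 0" using Suc.IH Suc.prems d1 by simp
    ultimately show ?thesis using d by simp
  next
    case False
    then have st: "storable (comp n ps k) (comp n ps (Suc k))" using ak unfolding Adj_def by simp
    have AS: "A (Suc k) = A k" using False A_Suc by simp
    have d1: "1 \<le> d" "A k < d" using Suc.prems AS by auto
    have "part (comp n ps (Suc k)) d \<le> part (comp n ps k) d" using storableD1[OF st d1(1)] .
    moreover have "part (comp n ps k) d = 0" using Suc.IH Suc.prems d1 by simp
    ultimately show ?thesis by simp
  qed
qed

lemma bound_C:
  assumes adj: "\<forall>k\<le>n. Adj ps k"
  shows "k \<le> Suc n \<Longrightarrow> q + A k - k < d \<Longrightarrow> part (comp n ps k) d = 0"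
proof -
  have main: "\<forall>k d. Suc n - k = m \<longrightarrow> k \<le> Suc n \<longrightarrow> q + A k - k < d \<longrightarrow> part (comp n ps k) d = 0" for m
  proof (induction m)
    case 0 then show ?case by auto
  next
    case (Suc m)
    show ?case
    proof (intro allI impI)
      fix k d assume km: "Suc n - k = Suc m" and kle: "k \<le> Suc n" and dk: "q + A k - k < d"
      have kn: "k \<le> n" using km by simp
      have ih: "q + A (Suc k) - Suc k < d' \<Longrightarrow> part (comp n ps (Suc k)) d' = 0" for d'
        using Suc.IH km kn by simp
      have ak: "Adj ps k" using adj kn by simp
      have kq: "k < q + A k" using kqA[OF kn] .
      show "part (comp n ps k) d = 0"
      proof (cases "Suc k \<in> L")
        case True
        then have st: "storable (comp n ps (Suc k)) (comp n ps k)" using ak unfolding Adj_def by simp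
        have AS: "A (Suc k) = Suc (A k)" using True A_Suc by simp
        have d1: "1 \<le> d" using dk by simp
        have "part (comp n ps k) d \<le> part (comp n ps (Suc k)) d" using storableD1[OF st d1] .
        moreover have "part (comp n ps (Suc k)) d = 0" using ih dk AS by simp
        ultimately show ?thesis by simp
      next
        case False
        then have st: "storable (comp n ps k) (comp n ps (Suc k))" using ak unfolding Adj_def by simp
        have AS: "A (Suc k) = A k" using False A_Suc by simp
        obtain d' where d: "d = Suc d'" using dk by (cases d) auto
        have d1: "1 \<le> d'" "q + A k - Suc k < d'" using dk kq d by auto
        have "part (comp n ps k) (Suc d') \<le> part (comp n ps (Suc k)) d'" using storableD2[OF st d1(1)] .
        moreover have "part (comp n ps (Suc k)) d' = 0" using ih d1 AS by simp
        ultimately show ?thesis using d by simp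
      qed
    qed
  qed
  show "k \<le> Suc n \<Longrightarrow> q + A k - k < d \<Longrightarrow> part (comp n ps k) d = 0" using main by blast
qed

lemma bound_dl:
  assumes ps: "ps \<in> ST n c" and k: "k \<le> n" and d: "dl k < d"
  shows "part (comp n ps k) d = 0"
proof -
  have adj: "\<forall>k\<le>n. Adj ps k" using ps ST_iff by simp
  show ?thesis
  proof (cases "A k < d")
    case True then show ?thesis using bound_A[OF adj k] by simp
  next
    case False
    then have "q + A k - k < d" using d unfolding dl_def C_def by simp
    then show ?thesis using bound_C[OF adj] k by simp
  qed
qed

lemma rect_mono:
  assumes lc: "\<And>i j. (i, Suc j) \<in> F \<Longrightarrow> 1 \<le> j \<Longrightarrow> (i, j) \<in> F"
    and uc: "\<And>i j. (Suc i, j) \<in> F \<Longrightarrow> 1 \<le> i \<Longrightarrow> (i, j) \<in> F"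
    and rs: "\<And>i j. (i, Suc j) \<in> F \<Longrightarrow> 1 \<le> j \<Longrightarrow> f (i, j) \<le> f (i, Suc j)"
    and ds: "\<And>i j. (Suc i, j) \<in> F \<Longrightarrow> 1 \<le> i \<Longrightarrow> f (i, j) \<le> f (Suc i, j)"
  shows "(i', j') \<in> F \<Longrightarrow> 1 \<le> i \<Longrightarrow> 1 \<le> j \<Longrightarrow> i \<le> i' \<Longrightarrow> j \<le> j' \<Longrightarrow> (f (i, j) :: nat) \<le> f (i', j')"
proof -
  have main: "\<forall>i' j'. (i' - i) + (j' - j) = m \<longrightarrow> (i', j') \<in> F \<longrightarrow> 1 \<le> i \<longrightarrow> 1 \<le> j \<longrightarrow> i \<le> i' \<longrightarrow> j \<le> j'
     \<longrightarrow> f (i, j) \<le> f (i', j')" for m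
  proof (induction m)
    case 0 then show ?case by auto
  next
    case (Suc m)
    show ?case
    proof (intro allI impI)
      fix i' j' assume m: "(i' - i) + (j' - j) = Suc m" and F: "(i', j') \<in> F" and
        i1: "1 \<le> i" and j1: "1 \<le> j" and ii: "i \<le> i'" and jj: "j \<le> j'"
      show "f (i, j) \<le> f (i', j')"
      proof (cases "j < j'")
        case True
        then obtain j'' where j'': "j' = Suc j''" by (cases j') auto
        have "j \<le> j''" using True j'' by simp
        then have F2: "(i', j'') \<in> F" using lc F j'' j1 by auto
        have "f (i, j) \<le> f (i', j'')" using Suc.IH m j'' F2 i1 j1 ii \<open>j \<le> j''\<close> True by auto
        also have "\<dots> \<le> f (i', j')" using rs F j'' j1 \<open>j \<le> j''\<close> by auto
        finally show ?thesis .
      next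
        case False
        then have jeq: "j' = j" using jj by simp
        then have "i < i'" using m by simp
        then obtain i'' where i'': "i' = Suc i''" by (cases i') auto
        have "i \<le> i''" using \<open>i < i'\<close> i'' by simp
        then have F2: "(i'', j') \<in> F" using uc F i'' i1 by auto
        have "f (i, j) \<le> f (i'', j')" using Suc.IH m i'' F2 i1 j1 \<open>i \<le> i''\<close> jeq by auto
        also have "\<dots> \<le> f (i', j')" using ds F i'' i1 \<open>i \<le> i''\<close> by auto
        finally show ?thesis .
      qed
    qed
  qed
  show "(i', j') \<in> F \<Longrightarrow> 1 \<le> i \<Longrightarrow> 1 \<le> j \<Longrightarrow> i \<le> i' \<Longrightarrow> j \<le> j' \<Longrightarrow> f (i, j) \<le> f (i', j')"
    using main by blast
qed

lemma Fer_lc: "(i, Suc j) \<in> Fer la \<Longrightarrow> 1 \<le> j \<Longrightarrow> (i, j) \<in> Fer la"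
proof -
  assume F: "(i, Suc j) \<in> Fer la" and j: "1 \<le> j"
  have "i \<le> A (q + i - Suc j)" "1 \<le> i" using F Fer_iff by auto
  moreover have "A (q + i - Suc j) \<le> A (q + i - j)" by (rule A_mono) simp
  ultimately show ?thesis using Fer_iff j by auto
qed

lemma Fer_uc: "(Suc i, j) \<in> Fer la \<Longrightarrow> 1 \<le> i \<Longrightarrow> (i, j) \<in> Fer la"
proof -
  assume F: "(Suc i, j) \<in> Fer la" and i: "1 \<le> i"
  have f: "Suc i \<le> A (q + Suc i - j)" "j < q + Suc i" "1 \<le> j" using Fer_k[OF F] by auto
  have e: "q + Suc i - j = Suc (q + i - j)" using f by simp
  have "A (Suc (q + i - j)) \<le> Suc (A (q + i - j))" by (rule A_Suc_le)
  then have "i \<le> A (q + i - j)" using f e by simp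
  then show ?thesis using Fer_iff i f by auto
qed


lemma right_step:
  assumes ps: "ps \<in> ST n c" and F: "(i, Suc j) \<in> Fer la" and j: "1 \<le> j"
  shows "Phi n c ps (i, j) \<le> Phi n c ps (i, Suc j)"
proof -
  have F0: "(i, j) \<in> Fer la" using Fer_lc[OF F j] .
  define m where "m = q + i - Suc j"
  have f: "1 \<le> m" "m \<le> n" "Suc j < q + i" "1 \<le> i" "i \<le> A m" using Fer_k[OF F] unfolding m_def by auto
  have km: "q + i - j = Suc m" unfolding m_def using f by simp
  have adj: "Adj ps m" using ps ST_iff f by simp
  have P0: "Phi n c ps (i, j) = part (comp n ps (Suc m)) (A (Suc m) + 1 - i)"
    using Phi_Fer[OF F0] km by simp
  have P1: "Phi n c ps (i, Suc j) = part (comp n ps m) (A m + 1 - i)"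
    using Phi_Fer[OF F] unfolding m_def by simp
  show ?thesis
  proof (cases "Suc m \<in> L")
    case True
    then have st: "storable (comp n ps (Suc m)) (comp n ps m)" using adj unfolding Adj_def by simp
    have AS: "A (Suc m) + 1 - i = Suc (A m + 1 - i)" using True A_Suc f by simp
    have d1: "1 \<le> A m + 1 - i" using f by simp
    show ?thesis unfolding P0 P1 AS using storableD2[OF st d1] .
  next
    case False
    then have st: "storable (comp n ps m) (comp n ps (Suc m))" using adj unfolding Adj_def by simp
    have AS: "A (Suc m) = A m" using False A_Suc by simp
    have d1: "1 \<le> A m + 1 - i" using f by simp
    show ?thesis unfolding P0 P1 AS using storableD1[OF st d1] .
  qed
qed

lemma down_step:
  assumes ps: "ps \<in> ST n c" and F: "(Suc i, j) \<in> Fer la" and i: "1 \<le> i"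
  shows "Phi n c ps (i, j) \<le> Phi n c ps (Suc i, j)"
proof -
  have F0: "(i, j) \<in> Fer la" using Fer_uc[OF F i] .
  define k where "k = q + i - j"
  have f: "1 \<le> k" "k \<le> n" "j < q + i" "i \<le> A k" using Fer_k[OF F0] unfolding k_def by auto
  have ks: "q + Suc i - j = Suc k" unfolding k_def using f by simp
  have f2: "Suc k \<le> n" "Suc i \<le> A (Suc k)" using Fer_k[OF F] ks by auto
  have adj: "Adj ps k" using ps ST_iff f by simp
  have P0: "Phi n c ps (i, j) = part (comp n ps k) (A k + 1 - i)"
    using Phi_Fer[OF F0] unfolding k_def by simp
  have P1: "Phi n c ps (Suc i, j) = part (comp n ps (Suc k)) (A (Suc k) + 1 - Suc i)"
    using Phi_Fer[OF F] ks by simp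
  show ?thesis
  proof (cases "Suc k \<in> L")
    case True
    then have st: "storable (comp n ps (Suc k)) (comp n ps k)" using adj unfolding Adj_def by simp
    have AS: "A (Suc k) + 1 - Suc i = A k + 1 - i" using True A_Suc f by simp
    have d1: "1 \<le> A k + 1 - i" using f by simp
    show ?thesis unfolding P0 P1 AS using storableD1[OF st d1] .
  next
    case False
    then have st: "storable (comp n ps k) (comp n ps (Suc k))" using adj unfolding Adj_def by simp
    have AS: "A (Suc k) = A k" using False A_Suc by simp
    have e: "A k + 1 - i = Suc (A k - i)" "A k + 1 - Suc i = A k - i" using f2 AS by simp_all
    have d1: "1 \<le> A k - i" using f2 AS by simp
    show ?thesis unfolding P0 P1 AS e using storableD2[OF st d1] .
  qed
qed

lemma Phi_RPP: assumes ps: "ps \<in> ST n c" shows "Phi n c ps \<in> RPP la"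
proof -
  have "Phi n c ps (i, j) \<le> Phi n c ps (i', j')"
    if "(i, j) \<in> Fer la" "(i', j') \<in> Fer la" "i \<le> i'" "j \<le> j'" for i j i' j'
  proof -
    have "1 \<le> i" "1 \<le> j" using that(1) Fer_iff by auto
    then show ?thesis
      using rect_mono[of "Fer la" "Phi n c ps", OF Fer_lc Fer_uc right_step[OF ps] down_step[OF ps]]
        that by blast
  qed
  moreover have "\<forall>b. b \<notin> Fer la \<longrightarrow> Phi n c ps b = 0" using Phi_out by blast
  ultimately show ?thesis unfolding RPP_def by blast
qed

lemma part_eq_list:
  assumes "is_partition xs" "is_partition ys" "\<forall>d. part xs d = part ys d"
  shows "xs = ys"
proof -
  have nz: "0 \<notin> set xs" "0 \<notin> set ys" using assms(1,2) unfolding is_partition_def by auto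
  have len: "length xs = length ys"
  proof (rule ccontr)
    assume ne: "length xs \<noteq> length ys"
    show False
    proof (cases "length xs < length ys")
      case True
      have "part ys (length ys) = ys ! (length ys - 1)" using True unfolding part_def by simp
      moreover have "ys ! (length ys - 1) \<in> set ys" using True by (intro nth_mem) simp
      then have "ys ! (length ys - 1) \<noteq> 0" using nz(2) by metis
      moreover have "part xs (length ys) = 0" using True unfolding part_def by simp
      ultimately show False using assms(3) by metis
    next
      case False
      then have T: "length ys < length xs" using ne by simp
      have "part xs (length xs) = xs ! (length xs - 1)" using T unfolding part_def by simp
      moreover have "xs ! (length xs - 1) \<in> set xs" using T by (intro nth_mem) simp
      then have "xs ! (length xs - 1) \<noteq> 0" using nz(1) by metis
      moreover have "part ys (length xs) = 0" using T unfolding part_def by simp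
      ultimately show False using assms(3) by metis
    qed
  qed
  show ?thesis
  proof (rule nth_equalityI[OF len])
    fix t assume "t < length xs"
    then have "part xs (Suc t) = xs ! t" "part ys (Suc t) = ys ! t" using len unfolding part_def by auto
    then show "xs ! t = ys ! t" using assms(3) by metis
  qed
qed

lemma comp_part: "is_partition (comp n ps k)" if "\<forall>x\<in>set ps. is_partition x" "length ps = n"
  using that unfolding comp_def is_partition_def by auto

lemma Phi_inj: "inj_on (Phi n c) (ST n c)"
proof (rule inj_onI)
  fix ps ps' assume ps: "ps \<in> ST n c" and ps': "ps' \<in> ST n c" and eq: "Phi n c ps = Phi n c ps'"
  have l: "length ps = n" "length ps' = n" "\<forall>x\<in>set ps. is_partition x" "\<forall>x\<in>set ps'. is_partition x"
    using ps ps' ST_iff by auto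
  have pe: "part (comp n ps k) d = part (comp n ps' k) d" if k: "1 \<le> k" "k \<le> n" for k d
  proof (cases "1 \<le> d \<and> d \<le> dl k")
    case True
    then have v: "valid k d" unfolding valid_def using k by simp
    show ?thesis using Phi_box[OF v, of ps] Phi_box[OF v, of ps'] eq by simp
  next
    case False
    then show ?thesis
    proof (cases "d = 0")
      case True then show ?thesis unfolding part_def by simp
    next
      case False
      then have "dl k < d" using \<open>\<not> (1 \<le> d \<and> d \<le> dl k)\<close> by simp
      then show ?thesis using bound_dl[OF ps k(2)] bound_dl[OF ps' k(2)] by simp
    qed
  qed
  have ce: "comp n ps k = comp n ps' k" if k: "1 \<le> k" "k \<le> n" for k
    using part_eq_list[OF comp_part[OF l(3,1)] comp_part[OF l(4,2)]] pe[OF k] by blast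
  show "ps = ps'"
  proof (rule nth_equalityI)
    show "length ps = length ps'" using l by simp
    fix t assume t: "t < length ps"
    have "comp n ps (Suc t) = comp n ps' (Suc t)" using ce[of "Suc t"] t l by simp
    then show "ps ! t = ps' ! t" using t l unfolding comp_def by simp
  qed
qed


definition mkpart :: "(nat \<Rightarrow> nat) \<Rightarrow> nat \<Rightarrow> nat list" where
  "mkpart g m = takeWhile (\<lambda>x. x \<noteq> 0) (map g [1..<Suc m])"

lemma mkpart:
  assumes dec: "\<And>d d'. 1 \<le> d \<Longrightarrow> d \<le> d' \<Longrightarrow> d' \<le> m \<Longrightarrow> g d' \<le> g d"
  shows "is_partition (mkpart g m)" and "part (mkpart g m) d = (if 1 \<le> d \<and> d \<le> m then g d else 0)"
proof -
  define xs where "xs = map g [1..<Suc m]"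
  define ys where "ys = takeWhile (\<lambda>x. x \<noteq> 0) xs"
  have ysd: "mkpart g m = ys" unfolding mkpart_def xs_def ys_def ..
  have lx: "length xs = m" unfolding xs_def by simp
  have nx: "t < m \<Longrightarrow> xs ! t = g (Suc t)" for t unfolding xs_def by (simp add: nth_upt del: upt_Suc)
  have ly: "length ys \<le> m" unfolding ys_def using length_takeWhile_le lx by metis
  have ny: "t < length ys \<Longrightarrow> ys ! t = g (Suc t)" for t
    unfolding ys_def using takeWhile_nth nx ly ys_def by (metis order.strict_trans2)
  have "sorted (rev ys)"
    unfolding sorted_rev_iff_nth_mono
  proof (intro allI impI)
    fix i j assume "i \<le> j" "j < length ys"
    then show "ys ! j \<le> ys ! i" using ny dec ly by simp
  qed
  moreover have "0 \<notin> set ys" unfolding ys_def using set_takeWhileD by fastforce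
  ultimately show "is_partition (mkpart g m)" unfolding ysd is_partition_def by simp
  show "part (mkpart g m) d = (if 1 \<le> d \<and> d \<le> m then g d else 0)"
    unfolding ysd
  proof (cases "1 \<le> d \<and> d \<le> length ys")
    case True
    have "d - 1 < length ys" using True by linarith
    then have "ys ! (d - 1) = g d" using ny[of "d - 1"] True by simp
    then show "part ys d = (if 1 \<le> d \<and> d \<le> m then g d else 0)"
      unfolding part_def using ly True by simp
  next
    case False
    have p0: "part ys d = 0" unfolding part_def using False by auto
    show "part ys d = (if 1 \<le> d \<and> d \<le> m then g d else 0)"
    proof (cases "1 \<le> d \<and> d \<le> m")
      case True
      then have lt: "length ys < m" "length ys < d" using False by auto
      have "\<not> (xs ! length ys \<noteq> 0)" unfolding ys_def
        by (rule nth_length_takeWhile) (use lt lx ys_def in simp)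
      then have "g (Suc (length ys)) = 0" using nx lt by simp
      moreover have "g d \<le> g (Suc (length ys))" using dec lt True by simp
      ultimately show ?thesis using p0 True by simp
    next
      case False then show ?thesis using p0 by auto
    qed
  qed
qed

definition FF where "FF f k d = f (box k d)"
definition Psi where "Psi f = map (\<lambda>k. mkpart (FF f k) (dl k)) [1..<Suc n]"

lemma RPP_box:
  assumes f: "f \<in> RPP la" and v: "valid k d" "valid k' d'"
    and le: "fst (box k d) \<le> fst (box k' d')" "snd (box k d) \<le> snd (box k' d')"
  shows "FF f k d \<le> FF f k' d'"
proof -
  have b: "box k d \<in> Fer la" "box k' d' \<in> Fer la" using valid_box v by auto
  obtain i j where ij: "box k d = (i, j)" by (cases "box k d")
  obtain i' j' where ij': "box k' d' = (i', j')" by (cases "box k' d'")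
  show ?thesis using f b le unfolding RPP_def FF_def ij ij' by auto
qed

lemma FF_dec:
  assumes f: "f \<in> RPP la" and k: "1 \<le> k" "k \<le> n" and d: "1 \<le> d" "d \<le> d'" "d' \<le> dl k"
  shows "FF f k d' \<le> FF f k d"
proof -
  have v: "valid k d" "valid k d'" unfolding valid_def using k d by auto
  have "d' \<le> A k" using d unfolding dl_def by simp
  then show ?thesis using d by (intro RPP_box[OF f v(2) v(1)]) (auto simp: box_def)
qed

lemma Psi_len: "length (Psi f) = n" unfolding Psi_def by simp

lemma comp_Psi: "1 \<le> k \<Longrightarrow> k \<le> n \<Longrightarrow> comp n (Psi f) k = mkpart (FF f k) (dl k)"
proof -
  assume k: "1 \<le> k" "k \<le> n"
  have "[1..<Suc n] ! (k - 1) = k" using nth_upt[of 1 "k - 1" "Suc n"] k by simp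
  then show ?thesis unfolding comp_def Psi_def using k by (simp del: upt_Suc)
qed

lemma G_Psi: assumes f: "f \<in> RPP la"
  shows "part (comp n (Psi f) k) d = (if valid k d then FF f k d else 0)"
proof (cases "1 \<le> k \<and> k \<le> n")
  case True
  have "part (mkpart (FF f k) (dl k)) d = (if 1 \<le> d \<and> d \<le> dl k then FF f k d else 0)"
    by (rule mkpart(2)) (use FF_dec[OF f] True in auto)
  then show ?thesis using comp_Psi True unfolding valid_def by simp
next
  case False
  then have "comp n (Psi f) k = []" unfolding comp_def by auto
  moreover have "\<not> valid k d" using False unfolding valid_def by auto
  ultimately show ?thesis by simp
qed

lemma A1: "A 1 = 1" using A_Suc[of 0] A0 oneL by simp

lemma Cn: "C n = 1"
proof -
  have "Suc n \<notin> L" using topR dj by blast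
  then have "A n = p" using A_Suc[of n] A_big[of "Suc n"] by simp
  then show ?thesis unfolding C_def using pq by simp
qed

lemma Psi_ST: assumes f: "f \<in> RPP la" shows "Psi f \<in> ST n c"
proof -
  let ?G = "\<lambda>k d. part (comp n (Psi f) k) d"
  have G: "?G k d = (if valid k d then FF f k d else 0)" for k d using G_Psi[OF f] .
  have parts: "\<forall>x\<in>set (Psi f). is_partition x"
  proof
    fix x assume "x \<in> set (Psi f)"
    then obtain k where "x = mkpart (FF f k) (dl k)" "1 \<le> k" "k \<le> n" unfolding Psi_def by auto
    then show "is_partition x" using mkpart(1)[of "dl k" "FF f k"] FF_dec[OF f] by auto
  qed
  have adj: "Adj (Psi f) k" if k: "k \<le> n" for k
  proof (cases "Suc k \<in> L")
    case True
    have Sk: "Suc k \<le> n" using True topR dj k by (metis IntI empty_iff le_SucE not_less_eq_eq)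
    have AS: "A (Suc k) = Suc (A k)" using True A_Suc by simp
    have CS: "C (Suc k) = C k" unfolding C_def AS by simp
    have "storable (comp n (Psi f) (Suc k)) (comp n (Psi f) k)"
      unfolding storable_def
    proof (intro allI impI conjI)
      fix d :: nat assume d: "1 \<le> d"
      show "?G k d \<le> ?G (Suc k) d"
      proof (cases "valid k d")
        case True
        have v2: "valid (Suc k) d" using True Sk unfolding valid_def dl_def CS AS by auto
        have "FF f k d \<le> FF f (Suc k) d"
          by (rule RPP_box[OF f True v2]) (use True in \<open>auto simp: box_def AS valid_def dl_def\<close>)
        then show ?thesis using G True v2 by simp
      next
        case False then show ?thesis using G by simp
      qed
      show "?G (Suc k) (Suc d) \<le> ?G k d"
      proof (cases "valid (Suc k) (Suc d)")
        case True
        have k1: "1 \<le> k"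
        proof (rule ccontr)
          assume "\<not> 1 \<le> k"
          then have "k = 0" by simp
          then show False using True A1 d unfolding valid_def dl_def by simp
        qed
        have v2: "valid k d" using True k1 k d unfolding valid_def dl_def CS AS by auto
        have "FF f (Suc k) (Suc d) \<le> FF f k d"
          by (rule RPP_box[OF f True v2]) (use v2 in \<open>auto simp: box_def AS valid_def dl_def\<close>)
        then show ?thesis using G True v2 by simp
      next
        case False then show ?thesis using G by simp
      qed
    qed
    then show ?thesis unfolding Adj_def using True by simp
  next
    case False
    have k1: "1 \<le> k" using False oneL by (cases k) auto
    have AS: "A (Suc k) = A k" using False A_Suc by simp
    have kq: "k < q + A k" using kqA[OF k] .
    have CS: "C (Suc k) = C k - 1" unfolding C_def AS by simp
    have "storable (comp n (Psi f) k) (comp n (Psi f) (Suc k))"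
      unfolding storable_def
    proof (intro allI impI conjI)
      fix d :: nat assume d: "1 \<le> d"
      show "?G (Suc k) d \<le> ?G k d"
      proof (cases "valid (Suc k) d")
        case True
        have v2: "valid k d" using True k1 k d unfolding valid_def dl_def CS AS by auto
        have "FF f (Suc k) d \<le> FF f k d"
          by (rule RPP_box[OF f True v2]) (use True in \<open>auto simp: box_def AS valid_def dl_def\<close>)
        then show ?thesis using G True v2 by simp
      next
        case False then show ?thesis using G by simp
      qed
      show "?G k (Suc d) \<le> ?G (Suc k) d"
      proof (cases "valid k (Suc d)")
        case True
        have Sk: "Suc k \<le> n"
        proof (rule ccontr)
          assume "\<not> Suc k \<le> n"
          then have "k = n" using k by simp
          then show False using True Cn d unfolding valid_def dl_def by simp
        qed
        have v2: "valid (Suc k) d" using True Sk d unfolding valid_def dl_def CS AS by auto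
        have "FF f k (Suc d) \<le> FF f (Suc k) d"
          by (rule RPP_box[OF f True v2]) (use True in \<open>auto simp: box_def AS valid_def dl_def\<close>)
        then show ?thesis using G True v2 by simp
      next
        case False then show ?thesis using G by simp
      qed
    qed
    then show ?thesis unfolding Adj_def using False by simp
  qed
  show ?thesis unfolding ST_iff using Psi_len parts adj by simp
qed

lemma Phi_Psi: assumes f: "f \<in> RPP la" shows "Phi n c (Psi f) = f"
proof
  fix b
  show "Phi n c (Psi f) b = f b"
  proof (cases "b \<in> Fer la")
    case True
    obtain i j where b: "b = (i, j)" by (cases b)
    define k where "k = q + i - j"
    define d where "d = A k + 1 - i"
    have v: "valid k d" and bx: "box k d = (i, j)" using Fer_box True b unfolding k_def d_def by auto
    have "Phi n c (Psi f) (box k d) = part (comp n (Psi f) k) d" using Phi_box[OF v] .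
    also have "\<dots> = FF f k d" using G_Psi[OF f] v by simp
    also have "\<dots> = f (box k d)" unfolding FF_def ..
    finally show ?thesis using bx b by simp
  next
    case False
    have "f b = 0" using f False unfolding RPP_def by blast
    then show ?thesis using Phi_out[OF False] by simp
  qed
qed

theorem bij: "bij_betw (Phi n c) (ST n c) (RPP la)"
  unfolding bij_betw_def
proof
  show "inj_on (Phi n c) (ST n c)" by (rule Phi_inj)
  show "Phi n c ` ST n c = RPP la"
  proof
    show "Phi n c ` ST n c \<subseteq> RPP la" using Phi_RPP by auto
    show "RPP la \<subseteq> Phi n c ` ST n c"
    proof
      fix f assume f: "f \<in> RPP la"
      then have "f = Phi n c (Psi f)" using Phi_Psi by simp
      moreover have "Psi f \<in> ST n c" using Psi_ST[OF f] .
      ultimately show "f \<in> Phi n c ` ST n c" by blast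
    qed
  qed
qed

end

theorem theorem4p11:
  fixes n :: nat and c :: "nat \<Rightarrow> nat"
  assumes "1 \<le> n" and "coxeter_elem n c"
  shows "bij_betw (Phi n c) (ST n c) (RPP (lam n c))"
proof -
  interpret LRc n c
    using LR_props[OF assms] assms(1) by unfold_locales auto
  show ?thesis by (rule bij)
qed

end
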